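(* Let $(U,V)$ be a jointly symmetric random vector with uniform margins and distribution function (copula) $C$, i.e. $(U,V)\stackrel{d}{=}(1-U,V)\stackrel{d}{=}(U,1-V)$. Let $T_\vee(u)=|2u-1|$ and let $C^*$ be the distribution function of $(T_\vee(U),T_\vee(V))$. Then for all $u,v\in[0,1]$, $$C(u,v)=\frac{2u+2v-1+(-1)^{\mathbf{1}\{(u-0.5)(v-0.5)<0\}}\,C^*\big(T_\vee(u),T_\vee(v)\big)}{4}.$$
   Context: $\mathbf{1}\{\cdot\}$ denotes the indicator function. *)

theory Defs
  imports "HOL-Probability.Probability"
begin

definition Tvee :: "real \<Rightarrow> real" where
  "Tvee u = \<bar>2 * u - 1\<bar>"

definition joint_cdf :: "'a measure \<Rightarrow> ('a \<Rightarrow> real) \<Rightarrow> ('a \<Rightarrow> real) \<Rightarrow> real \<Rightarrow> real \<Rightarrow> real" where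
  "joint_cdf M X Y u v = measure M {x \<in> space M. X x \<le> u \<and> Y x \<le> v}"

end

theory Submission
  imports Defs
begin


lemma unif_le:
  fixes M :: "'a measure" and U :: "'a \<Rightarrow> real"
  assumes "U \<in> borel_measurable M" "distr M lborel U = uniform_measure lborel {0..1}" "a \<in> {0..1}"
  shows "measure M {x\<in>space M. U x \<le> a} = a"
proof -
  have "measure (distr M lborel U) {..a} = measure M (U -` {..a} \<inter> space M)"
    using assms(1) by (intro measure_distr) auto
  moreover have "measure (uniform_measure lborel {0..1::real}) {..a} = a"
  proof -
    have "{0..1::real} \<inter> {..a} = {0..a}" using assms(3) by auto
    then show ?thesis using assms(3) by simp
  qed
  moreover have "U -` {..a} \<inter> space M = {x\<in>space M. U x \<le> a}" by auto
  ultimately show ?thesis using assms(2) by simp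
qed

lemma unif_eq:
  fixes M :: "'a measure" and U :: "'a \<Rightarrow> real"
  assumes "U \<in> borel_measurable M" "distr M lborel U = uniform_measure lborel {0..1}"
  shows "measure M {x\<in>space M. U x = a} = 0"
proof -
  have "measure (distr M lborel U) {a} = measure M (U -` {a} \<inter> space M)"
    using assms(1) by (intro measure_distr) auto
  moreover have "measure (uniform_measure lborel {0..1::real}) {a} = 0"
  proof -
    have "measure lborel ({0..1::real} \<inter> {a}) = 0"
      by (metis Int_insert_right inf_bot_right measure_empty measure_lborel_Icc atLeastAtMost_singleton cancel_comm_monoid_add_class.diff_cancel order_refl)
    then show ?thesis by simp
  qed
  moreover have "U -` {a} \<inter> space M = {x\<in>space M. U x = a}" by auto
  ultimately show ?thesis using assms(2) by simp
qed

lemma refl_lemma: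
  fixes M :: "'a measure" and f g :: "'a \<Rightarrow> real \<times> real"
  assumes "f \<in> borel_measurable M" "g \<in> borel_measurable M" "distr M borel f = distr M borel g"
   and "Measurable.pred borel P"
  shows "measure M {x\<in>space M. P (f x)} = measure M {x\<in>space M. P (g x)}"
proof -
  have S: "{p. P p} \<in> sets borel" using assms(4) by (simp add: pred_def)
  have "measure (distr M borel f) {p. P p} = measure M {x\<in>space M. P (f x)}"
    using measure_distr[OF assms(1) S] by (simp add: vimage_def Int_def conj_commute)
  moreover have "measure (distr M borel g) {p. P p} = measure M {x\<in>space M. P (g x)}"
    using measure_distr[OF assms(2) S] by (simp add: vimage_def Int_def conj_commute)
  ultimately show ?thesis using assms(3) by simp
qed


lemma msplit:
  assumes "finite_measure M" "{x\<in>space M. P1 x} \<in> sets M" "{x\<in>space M. P2 x} \<in> sets M"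
    "\<And>x. x \<in> space M \<Longrightarrow> P x = (P1 x \<or> P2 x)" "\<And>x. x \<in> space M \<Longrightarrow> \<not> (P1 x \<and> P2 x)"
  shows "measure M {x\<in>space M. P x} = measure M {x\<in>space M. P1 x} + measure M {x\<in>space M. P2 x}"
proof -
  interpret finite_measure M by fact
  have "{x\<in>space M. P x} = {x\<in>space M. P1 x} \<union> {x\<in>space M. P2 x}" using assms(4) by auto
  moreover have "{x\<in>space M. P1 x} \<inter> {x\<in>space M. P2 x} = {}" using assms(5) by auto
  ultimately show ?thesis using finite_measure_Union[OF assms(2,3)] by simp
qed

lemma mnull:
  assumes "finite_measure M" "{x\<in>space M. Q x} \<in> sets M" "measure M {x\<in>space M. Q x} = 0"
    "\<And>x. P x \<Longrightarrow> Q x"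
  shows "measure M {x\<in>space M. P x} = 0"
proof -
  interpret finite_measure M by fact
  have "measure M {x\<in>space M. P x} \<le> measure M {x\<in>space M. Q x}"
    using assms(2,4) by (intro finite_measure_mono) auto
  then show ?thesis using assms(3) measure_nonneg[of M] by (metis order_antisym)
qed

theorem propositionC1:
  fixes M :: "'a measure" and U V :: "'a \<Rightarrow> real" and u v :: real
  assumes "prob_space M"
    and "U \<in> borel_measurable M" and "V \<in> borel_measurable M"
    and "distr M lborel U = uniform_measure lborel {0..1}"
    and "distr M lborel V = uniform_measure lborel {0..1}"
    and "distr M borel (\<lambda>x. (U x, V x)) = distr M borel (\<lambda>x. (1 - U x, V x))"
    and "distr M borel (\<lambda>x. (U x, V x)) = distr M borel (\<lambda>x. (U x, 1 - V x))"
    and "u \<in> {0..1}" and "v \<in> {0..1}"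
  shows "joint_cdf M U V u v =
     (2 * u + 2 * v - 1
      + (-1::real) ^ (of_bool ((u - 1/2) * (v - 1/2) < 0) :: nat)
        * joint_cdf M (\<lambda>x. Tvee (U x)) (\<lambda>x. Tvee (V x)) (Tvee u) (Tvee v)) / 4"
proof -
  interpret prob_space M by fact
  have fm: "finite_measure M" by unfold_locales
  note [measurable] = assms(2,3)
  define F where "F a b = measure M {x\<in>space M. U x \<le> a \<and> V x \<le> b}" for a b
  have mUV: "(\<lambda>x. (U x, V x)) \<in> borel_measurable M" by measurable
  have mU1: "(\<lambda>x. (1 - U x, V x)) \<in> borel_measurable M" by measurable
  have mV1: "(\<lambda>x. (U x, 1 - V x)) \<in> borel_measurable M" by measurable
  have predle: "Measurable.pred borel (\<lambda>p::real\<times>real. fst p \<le> c \<and> snd p \<le> d)" for c d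
    unfolding borel_prod[symmetric] by measurable
  have U0: "measure M {x\<in>space M. U x = a} = 0" for a using unif_eq[OF assms(2,4)] .
  have V0: "measure M {x\<in>space M. V x = a} = 0" for a using unif_eq[OF assms(3,5)] .
  have K1: "F (1 - a) b = b - F a b" if "a \<in> {0..1}" "b \<in> {0..1}" for a b
  proof -
    have "F (1 - a) b = measure M {x\<in>space M. 1 - U x \<le> 1 - a \<and> V x \<le> b}"
      unfolding F_def using refl_lemma[OF mUV mU1 assms(6) predle[of "1 - a" b]] by simp
    also have "\<dots> = measure M {x\<in>space M. U x \<ge> a \<and> V x \<le> b}" by simp
    finally have e1: "F (1 - a) b = measure M {x\<in>space M. U x \<ge> a \<and> V x \<le> b}" .
    have e2: "measure M {x\<in>space M. V x \<le> b} = measure M {x\<in>space M. U x \<ge> a \<and> V x \<le> b}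
        + measure M {x\<in>space M. U x < a \<and> V x \<le> b}"
      by (rule msplit[OF fm]) auto
    have e3: "F a b = measure M {x\<in>space M. U x < a \<and> V x \<le> b}
        + measure M {x\<in>space M. U x = a \<and> V x \<le> b}"
      unfolding F_def by (rule msplit[OF fm]) auto
    have e4: "measure M {x\<in>space M. U x = a \<and> V x \<le> b} = 0"
      by (rule mnull[OF fm _ U0[of a]]) auto
    have e5: "measure M {x\<in>space M. V x \<le> b} = b" using unif_le[OF assms(3,5) that(2)] .
    show ?thesis using e1 e2 e3 e4 e5 by linarith
  qed
  have K2: "F a (1 - b) = a - F a b" if "a \<in> {0..1}" "b \<in> {0..1}" for a b
  proof -
    have "F a (1 - b) = measure M {x\<in>space M. U x \<le> a \<and> 1 - V x \<le> 1 - b}"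
      unfolding F_def using refl_lemma[OF mUV mV1 assms(7) predle[of a "1 - b"]] by simp
    also have "\<dots> = measure M {x\<in>space M. U x \<le> a \<and> V x \<ge> b}" by simp
    finally have e1: "F a (1 - b) = measure M {x\<in>space M. U x \<le> a \<and> V x \<ge> b}" .
    have e2: "measure M {x\<in>space M. U x \<le> a} = measure M {x\<in>space M. U x \<le> a \<and> V x \<ge> b}
        + measure M {x\<in>space M. U x \<le> a \<and> V x < b}"
      by (rule msplit[OF fm]) auto
    have e3: "F a b = measure M {x\<in>space M. U x \<le> a \<and> V x < b}
        + measure M {x\<in>space M. U x \<le> a \<and> V x = b}"
      unfolding F_def by (rule msplit[OF fm]) auto
    have e4: "measure M {x\<in>space M. U x \<le> a \<and> V x = b} = 0"
      by (rule mnull[OF fm _ V0[of b]]) auto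
    have e5: "measure M {x\<in>space M. U x \<le> a} = a" using unif_le[OF assms(2,4) that(1)] .
    show ?thesis using e1 e2 e3 e4 e5 by linarith
  qed
  have K3a: "measure M {x\<in>space M. U x \<le> e \<and> c \<le> V x \<and> V x \<le> d} = F e d - F e c"
    if "c \<le> d" for c d e
  proof -
    have e1: "F e d = F e c + measure M {x\<in>space M. U x \<le> e \<and> c < V x \<and> V x \<le> d}"
      unfolding F_def by (rule msplit[OF fm]) (use that in auto)
    have e2: "measure M {x\<in>space M. U x \<le> e \<and> c \<le> V x \<and> V x \<le> d} =
       measure M {x\<in>space M. U x \<le> e \<and> V x = c} + measure M {x\<in>space M. U x \<le> e \<and> c < V x \<and> V x \<le> d}"
      by (rule msplit[OF fm]) (use that in auto)
    have e3: "measure M {x\<in>space M. U x \<le> e \<and> V x = c} = 0"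
      by (rule mnull[OF fm _ V0[of c]]) auto
    show ?thesis using e1 e2 e3 by linarith
  qed
  have K3: "measure M {x\<in>space M. (a \<le> U x \<and> U x \<le> b) \<and> (c \<le> V x \<and> V x \<le> d)}
      = F b d - F a d - F b c + F a c"
    if "a \<le> b" "c \<le> d" for a b c d
  proof -
    have e1: "measure M {x\<in>space M. U x \<le> b \<and> c \<le> V x \<and> V x \<le> d} =
       measure M {x\<in>space M. U x \<le> a \<and> c \<le> V x \<and> V x \<le> d} + measure M {x\<in>space M. (a < U x \<and> U x \<le> b) \<and> c \<le> V x \<and> V x \<le> d}"
      by (rule msplit[OF fm]) (use that in auto)
    have e2: "measure M {x\<in>space M. (a \<le> U x \<and> U x \<le> b) \<and> (c \<le> V x \<and> V x \<le> d)} =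
       measure M {x\<in>space M. U x = a \<and> c \<le> V x \<and> V x \<le> d} + measure M {x\<in>space M. (a < U x \<and> U x \<le> b) \<and> c \<le> V x \<and> V x \<le> d}"
      by (rule msplit[OF fm]) (use that in auto)
    have e3: "measure M {x\<in>space M. U x = a \<and> c \<le> V x \<and> V x \<le> d} = 0"
      by (rule mnull[OF fm _ U0[of a]]) auto
    show ?thesis using e1 e2 e3 K3a[OF that(2), of a] K3a[OF that(2), of b] by linarith
  qed
  have Cs: "joint_cdf M (\<lambda>x. Tvee (U x)) (\<lambda>x. Tvee (V x)) (Tvee u) (Tvee v) =
     measure M {x\<in>space M. (min u (1-u) \<le> U x \<and> U x \<le> max u (1-u)) \<and> (min v (1-v) \<le> V x \<and> V x \<le> max v (1-v))}"
    unfolding joint_cdf_def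
    by (rule arg_cong[where f="measure M"]) (auto simp: Tvee_def abs_le_iff)
  also have "\<dots> = F (max u (1-u)) (max v (1-v)) - F (min u (1-u)) (max v (1-v))
      - F (max u (1-u)) (min v (1-v)) + F (min u (1-u)) (min v (1-v))"
    by (rule K3) auto
  finally have Cs2: "joint_cdf M (\<lambda>x. Tvee (U x)) (\<lambda>x. Tvee (V x)) (Tvee u) (Tvee v) =
      F (max u (1-u)) (max v (1-v)) - F (min u (1-u)) (max v (1-v))
      - F (max u (1-u)) (min v (1-v)) + F (min u (1-u)) (min v (1-v))" .
  have C: "joint_cdf M U V u v = F u v" unfolding joint_cdf_def F_def by simp
  have i1: "F (1 - u) v = v - F u v" using K1 assms(8,9) by blast
  have i2: "F u (1 - v) = u - F u v" using K2 assms(8,9) by blast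
  have i3: "F (1 - u) (1 - v) = (1 - v) - F u (1 - v)" using K1[of u "1 - v"] assms(8,9) by auto
  have "u < 1/2 \<or> u = 1/2 \<or> u > 1/2" "v < 1/2 \<or> v = 1/2 \<or> v > 1/2" by auto
  then show ?thesis
    using C Cs2 i1 i2 i3 by (elim disjE; ((simp only:)?); auto simp: min_def max_def mult_less_0_iff Tvee_def)
qed

end
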